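(* Let $n\ge 1$ and $k\ge 1$ be natural numbers and let $$\phi_k \;=\; \Box \bigvee_{i=1}^k \Big(p_i\wedge \bigwedge_{j\neq i} \neg p_j\Big) \;\to\; \lozenge \bigvee_{i=1}^k (p_i\wedge \lozenge p_i).$$ Then $\phi_k$ is valid in the frame $(\mathbb{R}^n,R_{=1})$ if and only if $k<\chi(S^n)$.
   Context: Modal formulas are built from propositional variables using $\bot$, $\to$ and one unary modality $\lozenge$, with $\Box=\neg\lozenge\neg$. In the frame $(\mathbb{R}^n,R_{=1})$, $xR_{=1}y$ iff $\|x-y\|=1$ (Euclidean norm); $x\models\lozenge\varphi$ iff some $y$ with $xR_{=1}y$ satisfies $\varphi$; a formula is valid if it is true at every point under every valuation (assignment of subsets of $\mathbb{R}^n$ to variables). $S^n$ denotes the unit sphere $\{x\in\mathbb{R}^n:\|x\|=1\}$ of $\mathbb{R}^n$, regarded as a graph in which two points are adjacent iff their distance is exactly $1$, and $\chi(S^n)$ is its chromatic number (which is finite). *)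

theory Defs
  imports "HOL-Analysis.Analysis"
begin

datatype fm = Var nat | Bot | Imp fm fm | Dia fm

definition Neg :: "fm \<Rightarrow> fm" where "Neg a = Imp a Bot"
definition Top :: fm where "Top = Neg Bot"
definition Box :: "fm \<Rightarrow> fm" where "Box a = Neg (Dia (Neg a))"
definition Or :: "fm \<Rightarrow> fm \<Rightarrow> fm" where "Or a b = Imp (Neg a) b"
definition And :: "fm \<Rightarrow> fm \<Rightarrow> fm" where "And a b = Neg (Imp a (Neg b))"

definition Disj :: "fm list \<Rightarrow> fm" where "Disj xs = foldr Or xs Bot"
definition Conj :: "fm list \<Rightarrow> fm" where "Conj xs = foldr And xs Top"

definition R1 :: "'a::euclidean_space \<Rightarrow> 'a \<Rightarrow> bool" where
  "R1 x y \<longleftrightarrow> norm (x - y) = 1"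

fun sem :: "(nat \<Rightarrow> 'a::euclidean_space set) \<Rightarrow> 'a \<Rightarrow> fm \<Rightarrow> bool" where
  "sem V x (Var p) = (x \<in> V p)"
| "sem V x Bot = False"
| "sem V x (Imp a b) = (sem V x a \<longrightarrow> sem V x b)"
| "sem V x (Dia a) = (\<exists>y. R1 x y \<and> sem V y a)"

definition valid_R1 :: "'a::euclidean_space itself \<Rightarrow> fm \<Rightarrow> bool" where
  "valid_R1 _ f \<longleftrightarrow> (\<forall>(V :: nat \<Rightarrow> 'a set) x. sem V x f)"

definition phi :: "nat \<Rightarrow> fm" where
  "phi k = Imp
     (Box (Disj (map (\<lambda>i. And (Var i) (Conj (map (\<lambda>j. Neg (Var j)) (filter (\<lambda>j. j \<noteq> i) [1..<k+1]))))
                     [1..<k+1])))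
     (Dia (Disj (map (\<lambda>i. And (Var i) (Dia (Var i))) [1..<k+1])))"

definition colorable :: "'a set \<Rightarrow> ('a \<Rightarrow> 'a \<Rightarrow> bool) \<Rightarrow> nat \<Rightarrow> bool" where
  "colorable S E m \<longleftrightarrow>
     (\<exists>c. (\<forall>x\<in>S. c x < m) \<and> (\<forall>x\<in>S. \<forall>y\<in>S. E x y \<longrightarrow> c x \<noteq> c y))"

definition chromatic_number :: "'a set \<Rightarrow> ('a \<Rightarrow> 'a \<Rightarrow> bool) \<Rightarrow> nat" where
  "chromatic_number S E = (LEAST m. colorable S E m)"

end

theory Submission
  imports Defs
begin

lemma sem_Neg[simp]: "sem V x (Neg a) = (\<not> sem V x a)" by (simp add: Neg_def)
lemma sem_Top[simp]: "sem V x Top" by (simp add: Top_def)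
lemma sem_Box[simp]: "sem V x (Box a) = (\<forall>y. R1 x y \<longrightarrow> sem V y a)" by (simp add: Box_def)
lemma sem_Or[simp]: "sem V x (Or a b) = (sem V x a \<or> sem V x b)" by (auto simp add: Or_def)
lemma sem_And[simp]: "sem V x (And a b) = (sem V x a \<and> sem V x b)" by (auto simp add: And_def)
lemma sem_Disj[simp]: "sem V x (Disj xs) = (\<exists>f\<in>set xs. sem V x f)"
  by (induction xs) (auto simp: Disj_def)
lemma sem_Conj[simp]: "sem V x (Conj xs) = (\<forall>f\<in>set xs. sem V x f)"
  by (induction xs) (auto simp: Conj_def)

lemma sem_Disj_map: "sem V x (Disj (map g xs)) = (\<exists>i\<in>set xs. sem V x (g i))"
  by (induction xs) (auto simp: Disj_def)
lemma sem_Conj_map: "sem V x (Conj (map g xs)) = (\<forall>i\<in>set xs. sem V x (g i))"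
  by (induction xs) (auto simp: Conj_def)

lemma sem_phi:
  "sem V x (phi k) \<longleftrightarrow>
    ((\<forall>y. R1 x y \<longrightarrow> (\<exists>i\<in>{1..k}. y \<in> V i \<and> (\<forall>j\<in>{1..k}. j \<noteq> i \<longrightarrow> y \<notin> V j)))
     \<longrightarrow> (\<exists>y. R1 x y \<and> (\<exists>i\<in>{1..k}. y \<in> V i \<and> (\<exists>z. R1 y z \<and> z \<in> V i))))"
proof -
  have e: "set [1..<k+1] = {1..k}" by auto
  have a: "sem V y (Disj (map (\<lambda>i. And (Var i) (Conj (map (\<lambda>j. Neg (Var j)) (filter (\<lambda>j. j \<noteq> i) [1..<k+1])))) [1..<k+1]))
     \<longleftrightarrow> (\<exists>i\<in>{1..k}. y \<in> V i \<and> (\<forall>j\<in>{1..k}. j \<noteq> i \<longrightarrow> y \<notin> V j))" for y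
    by (simp only: sem_Disj_map sem_And sem_Conj_map sem_Neg sem.simps(1) set_filter e) blast
  have b: "sem V y (Disj (map (\<lambda>i. And (Var i) (Dia (Var i))) [1..<k+1]))
     \<longleftrightarrow> (\<exists>i\<in>{1..k}. y \<in> V i \<and> (\<exists>z. R1 y z \<and> z \<in> V i))" for y
    by (simp only: sem_Disj_map sem_And sem.simps(1) sem.simps(4) e)
  show ?thesis unfolding phi_def sem.simps(3) sem_Box sem.simps(4) a b ..
qed

lemma colorable_mono: "colorable S E m \<Longrightarrow> m \<le> m' \<Longrightarrow> colorable S E m'"
  unfolding colorable_def by (meson order_less_le_trans)

lemma finitely_colorable:
  "\<exists>M. colorable (S :: (real^'n) set) (\<lambda>x y. dist x y = 1) M"
proof -
  define n where "n = CARD('n)"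
  define s :: real where "s = 1 / (real n + 1)"
  define N :: int where "N = int n + 3"
  have npos: "n \<ge> 1" unfolding n_def by (simp add: Suc_le_eq)
  have spos: "s > 0" unfolding s_def by simp
  define cv where "cv = (\<lambda>y::real^'n. (\<lambda>i. \<lfloor>y$i / s\<rfloor> mod N))"
  define F where "F = (Pi UNIV (\<lambda>_::'n. {0..<N}))"
  have finF: "finite F" unfolding F_def
    by (metis PiE_UNIV_domain finite_PiE finite finite_atLeastLessThan_int)
  have cvF: "cv y \<in> F" for y unfolding cv_def F_def N_def by auto
  obtain h where h: "bij_betw h F {0..<card F}" using ex_bij_betw_finite_nat[OF finF] by blast
  have key: "cv x \<noteq> cv y" if d: "dist x y = 1" for x y
  proof
    assume eq: "cv x = cv y"
    show False
    proof (cases "\<forall>i. \<lfloor>x$i / s\<rfloor> = \<lfloor>y$i / s\<rfloor>")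
      case True
      have "\<bar>(x - y)$i\<bar> < s" for i
      proof -
        have eqr: "real_of_int \<lfloor>x$i / s\<rfloor> = real_of_int \<lfloor>y$i / s\<rfloor>" using True by simp
        have "\<lfloor>x$i / s\<rfloor> \<le> x$i / s" "x$i / s < \<lfloor>x$i / s\<rfloor> + 1"
          "\<lfloor>y$i / s\<rfloor> \<le> y$i / s" "y$i / s < \<lfloor>y$i / s\<rfloor> + 1" by linarith+
        then have a: "\<bar>x$i / s - y$i / s\<bar> < 1" unfolding abs_less_iff using eqr by linarith
        have "\<bar>x$i - y$i\<bar> = s * \<bar>x$i / s - y$i / s\<bar>" using spos
          by (simp add: abs_mult field_simps)
        also have "\<dots> < s * 1" using a spos by (intro mult_strict_left_mono) auto
        finally show ?thesis by simp
      qed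
      hence "(\<Sum>i\<in>UNIV. \<bar>(x - y)$i\<bar>) < (\<Sum>i\<in>(UNIV::'n set). s)"
        by (intro sum_strict_mono) auto
      also have "\<dots> = real n * s" by (simp add: n_def)
      also have "\<dots> < 1" unfolding s_def by (simp add: field_simps)
      finally have "norm (x - y) < 1" using norm_le_l1_cart[of "x - y"] by linarith
      thus False using d by (simp add: dist_norm)
    next
      case False
      then obtain i where ne: "\<lfloor>x$i / s\<rfloor> \<noteq> \<lfloor>y$i / s\<rfloor>" by blast
      have "\<lfloor>x$i / s\<rfloor> mod N = \<lfloor>y$i / s\<rfloor> mod N" using eq unfolding cv_def by metis
      then have "N dvd (\<lfloor>x$i / s\<rfloor> - \<lfloor>y$i / s\<rfloor>)" by (simp add: mod_eq_dvd_iff)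
      then obtain q where q: "\<lfloor>x$i / s\<rfloor> - \<lfloor>y$i / s\<rfloor> = N * q" by blast
      with ne have "q \<noteq> 0" by auto
      hence "\<bar>N * q\<bar> \<ge> N" unfolding N_def by (simp add: abs_mult)
      hence bigf: "\<bar>\<lfloor>x$i / s\<rfloor> - \<lfloor>y$i / s\<rfloor>\<bar> \<ge> N" using q by simp
      have "\<bar>x$i / s - y$i / s\<bar> > real_of_int N - 1"
      proof -
        have "real_of_int \<bar>\<lfloor>x$i / s\<rfloor> - \<lfloor>y$i / s\<rfloor>\<bar> \<ge> real_of_int N"
          using bigf by linarith
        moreover have "\<lfloor>x$i / s\<rfloor> \<le> x$i / s" "x$i / s < \<lfloor>x$i / s\<rfloor> + 1"
          "\<lfloor>y$i / s\<rfloor> \<le> y$i / s" "y$i / s < \<lfloor>y$i / s\<rfloor> + 1" by linarith+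
        ultimately show ?thesis by linarith
      qed
      hence a: "\<bar>x$i / s - y$i / s\<bar> > real n + 2" unfolding N_def by simp
      have "\<bar>x$i - y$i\<bar> = s * \<bar>x$i / s - y$i / s\<bar>" using spos
        by (simp add: abs_mult field_simps)
      also have "\<dots> > s * (real n + 2)" using a spos by (intro mult_strict_left_mono) auto
      finally have "\<bar>x$i - y$i\<bar> > s * (real n + 2)" .
      moreover have "s * (real n + 2) > 1" unfolding s_def by (simp add: field_simps)
      moreover have "\<bar>(x - y)$i\<bar> \<le> norm (x - y)" by (rule component_le_norm_cart)
      ultimately show False using d by (simp add: dist_norm)
    qed
  qed
  have "colorable S (\<lambda>x y. dist x y = 1) (card F)"
    unfolding colorable_def
  proof (intro exI[of _ "h \<circ> cv"] conjI ballI impI)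
    fix x :: "real^'n" show "(h \<circ> cv) x < card F" using h cvF[of x] by (auto simp: bij_betw_def)
  next
    fix x y :: "real^'n" assume "dist x y = 1"
    then have "cv x \<noteq> cv y" by (rule key)
    then show "(h \<circ> cv) x \<noteq> (h \<circ> cv) y" using h cvF
      by (auto simp: bij_betw_def inj_on_def)
  qed
  thus ?thesis by blast
qed

theorem proposition3p13:
  fixes k :: nat
  assumes "k \<ge> 1"
  shows "valid_R1 TYPE(real^'n) (phi k) \<longleftrightarrow>
         k < chromatic_number (sphere (0::real^'n) 1) (\<lambda>x y. dist x y = 1)"
proof -
  let ?S = "sphere (0::real^'n) 1"
  let ?E = "\<lambda>x y::real^'n. dist x y = 1"
  have v: "valid_R1 TYPE(real^'n) (phi k) \<longleftrightarrow> \<not> colorable ?S ?E k"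
  proof
    assume val: "valid_R1 TYPE(real^'n) (phi k)"
    show "\<not> colorable ?S ?E k"
    proof
      assume "colorable ?S ?E k"
      then obtain c where c1: "\<forall>x\<in>?S. c x < k" and c2: "\<forall>x\<in>?S. \<forall>y\<in>?S. ?E x y \<longrightarrow> c x \<noteq> c y"
        unfolding colorable_def by blast
      define V where "V = (\<lambda>i. {y \<in> ?S. c y + 1 = i})"
      have "sem V 0 (phi k)" using val unfolding valid_R1_def by blast
      moreover have "\<forall>y. R1 0 y \<longrightarrow> (\<exists>i\<in>{1..k}. y \<in> V i \<and> (\<forall>j\<in>{1..k}. j \<noteq> i \<longrightarrow> y \<notin> V j))"
      proof (intro allI impI)
        fix y :: "real^'n" assume "R1 0 y"
        hence yS: "y \<in> ?S" by (simp add: R1_def)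
        show "\<exists>i\<in>{1..k}. y \<in> V i \<and> (\<forall>j\<in>{1..k}. j \<noteq> i \<longrightarrow> y \<notin> V j)"
        proof -
          have "c y < k" using c1 yS by blast
          then show ?thesis using yS by (intro bexI[of _ "c y + 1"]) (auto simp: V_def)
        qed
      qed
      moreover have "\<not> (\<exists>y. R1 0 y \<and> (\<exists>i\<in>{1..k}. y \<in> V i \<and> (\<exists>z. R1 y z \<and> z \<in> V i)))"
      proof -
        have c2': "\<forall>x y::real^'n. norm x = 1 \<longrightarrow> norm y = 1 \<longrightarrow> norm (x - y) = 1 \<longrightarrow> c x \<noteq> c y"
          using c2 by (simp add: dist_norm)
        show ?thesis
        proof
          assume "\<exists>y. R1 0 y \<and> (\<exists>i\<in>{1..k}. y \<in> V i \<and> (\<exists>z. R1 y z \<and> z \<in> V i))"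
          then obtain y i z where h: "R1 0 y" "y \<in> V i" "R1 y z" "z \<in> V i" by blast
          then have "norm y = 1" "norm z = 1" "norm (y - z) = 1" "c y = c z" by (auto simp: V_def R1_def)
          with c2' show False by blast
        qed
      qed
      ultimately show False unfolding sem_phi by blast
    qed
  next
    assume nc: "\<not> colorable ?S ?E k"
    show "valid_R1 TYPE(real^'n) (phi k)"
      unfolding valid_R1_def
    proof (intro allI, rule ccontr)
      fix V :: "nat \<Rightarrow> (real^'n) set" and x
      assume "\<not> sem V x (phi k)"
      then have box: "\<forall>y. R1 x y \<longrightarrow> (\<exists>i\<in>{1..k}. y \<in> V i \<and> (\<forall>j\<in>{1..k}. j \<noteq> i \<longrightarrow> y \<notin> V j))"
        and dia: "\<not> (\<exists>y. R1 x y \<and> (\<exists>i\<in>{1..k}. y \<in> V i \<and> (\<exists>z. R1 y z \<and> z \<in> V i)))"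
        unfolding sem_phi by blast+
      define f where "f = (\<lambda>y. SOME i. i \<in> {1..k} \<and> y + x \<in> V i)"
      have fP: "f y \<in> {1..k} \<and> y + x \<in> V (f y)" if "y \<in> ?S" for y
      proof -
        have "R1 x (y + x)" using that by (simp add: R1_def)
        then have "\<exists>i. i \<in> {1..k} \<and> y + x \<in> V i" using box by blast
        then show ?thesis unfolding f_def by (rule someI_ex)
      qed
      have "colorable ?S ?E k" unfolding colorable_def
      proof (intro exI[of _ "\<lambda>y. f y - 1"] conjI ballI impI)
        fix y assume "y \<in> ?S" then show "f y - 1 < k" using fP[of y] by auto
      next
        fix y z assume yS: "y \<in> ?S" and zS: "z \<in> ?S" and d: "dist y z = 1"
        show "f y - 1 \<noteq> f z - 1"
        proof
          assume "f y - 1 = f z - 1"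
          then have "f y = f z" using fP[OF yS] fP[OF zS] by auto
          then have zV: "z + x \<in> V (f y)" using fP[OF zS] by simp
          have r1: "R1 x (y + x)" using yS by (simp add: R1_def)
          have r2: "R1 (y + x) (z + x)" using d by (simp add: R1_def dist_norm)
          have "f y \<in> {1..k}" "y + x \<in> V (f y)" using fP[OF yS] by auto
          then show False using dia r1 r2 zV by blast
        qed
      qed
      with nc show False by blast
    qed
  qed
  obtain M where M: "colorable ?S ?E M" using finitely_colorable by blast
  have "\<not> colorable ?S ?E k \<longleftrightarrow> k < chromatic_number ?S ?E"
    unfolding chromatic_number_def
  proof
    assume "\<not> colorable ?S ?E k"
    moreover have "colorable ?S ?E (LEAST m. colorable ?S ?E m)" using M by (rule LeastI)
    ultimately show "k < (LEAST m. colorable ?S ?E m)"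
    proof -
      assume a: "\<not> colorable ?S ?E k" and b: "colorable ?S ?E (LEAST m. colorable ?S ?E m)"
      show ?thesis
      proof (rule ccontr)
        assume "\<not> k < (LEAST m. colorable ?S ?E m)"
        then have "(LEAST m. colorable ?S ?E m) \<le> k" by simp
        with b have "colorable ?S ?E k" by (rule colorable_mono)
        with a show False by blast
      qed
    qed
  next
    assume "k < (LEAST m. colorable ?S ?E m)"
    then show "\<not> colorable ?S ?E k" using Least_le[of "colorable ?S ?E" k] by linarith
  qed
  with v show ?thesis by simp
qed

end
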